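(* Let $d \ge 1$, $p \ge 1$, and let $\Sigma \in \mathbb{R}^{d\times d}$ be positive definite. Let $\eta$ be a Borel probability distribution on $\mathbb{R}^d$ that is $(p,\Sigma)$-exponentially controlled. Then for every probability distribution $\zeta$ on $\mathbb{R}^d$ that is absolutely continuous with respect to $\eta$, $$W_{p,\Sigma}(\eta,\zeta) \le (3+d)\,\mathcal{K}_p(\eta\mid\zeta), \qquad \text{where } \mathcal{K}_p(\eta\mid\zeta) := \mathrm{KL}(\zeta\,\|\,\eta)^{1/p} + \big\{\mathrm{KL}(\zeta\,\|\,\eta)/2\big\}^{1/(2p)}.$$
   Context: For distributions $\eta,\zeta$ on $\mathbb{R}^d$, $p\ge 1$ and positive-definite $\Sigma$, the $(p,\Sigma)$-Wasserstein distance is $W_{p,\Sigma}(\eta,\zeta) := \inf_{\omega}\left\{\int \|\Sigma^{-1/2}(\theta-\theta')\|_2^p\,\omega(d\theta,d\theta')\right\}^{1/p}$, the infimum over all couplings $\omega$ of $\eta$ and $\zeta$ (Borel probability measures on $\mathbb{R}^d\times\mathbb{R}^d$ with marginals $\eta$ and $\zeta$). A distribution $\eta$ is $(p,\Sigma)$-exponentially controlled if $\inf_{\theta'\in\mathbb{R}^d}\log\int e^{\|\Sigma^{-1/2}(\theta-\theta')\|_2^p}\,\eta(d\theta) \le d/2$. $\mathrm{KL}(\zeta\|\eta) = \int \log(d\zeta/d\eta)\,d\zeta$ is the Kullback–Leibler divergence. *)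

theory Defs
  imports "HOL-Probability.Probability"
begin

definition pos_def_mat :: "real^'n^'n \<Rightarrow> bool" where
  "pos_def_mat S \<longleftrightarrow> transpose S = S \<and> (\<forall>x. x \<noteq> 0 \<longrightarrow> 0 < x \<bullet> (S *v x))"

text \<open>The Mahalanobis norm, i.e. the Euclidean norm of Sigma^(-1/2) v, where
  Sigma^(-1/2) is the symmetric positive definite inverse square root:
  its square equals v' Sigma^(-1) v.\<close>
definition mnorm :: "real^'n^'n \<Rightarrow> real^'n \<Rightarrow> real" where
  "mnorm S v = sqrt (v \<bullet> (matrix_inv S *v v))"

definition couplings :: "(real^'n) measure \<Rightarrow> (real^'n) measure \<Rightarrow> ((real^'n) \<times> (real^'n)) measure set" where
  "couplings \<eta> \<zeta> = {\<omega>. sets \<omega> = sets (borel \<Otimes>\<^sub>M borel) \<and> prob_space \<omega> \<and>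
      distr \<omega> borel fst = \<eta> \<and> distr \<omega> borel snd = \<zeta>}"

definition wasserstein :: "real \<Rightarrow> real^'n^'n \<Rightarrow> (real^'n) measure \<Rightarrow> (real^'n) measure \<Rightarrow> ennreal" where
  "wasserstein p S \<eta> \<zeta> =
     (let c = (INF \<omega>\<in>couplings \<eta> \<zeta>. \<integral>\<^sup>+ z. ennreal (mnorm S (fst z - snd z) powr p) \<partial>\<omega>)
      in if c = \<infinity> then \<infinity> else ennreal (enn2real c powr (1 / p)))"

text \<open>(p,Sigma)-exponential control:  inf_{theta'} log E_eta exp(||..||^p) \<le> d/2,
  written equivalently (log monotone) as inf_{theta'} E_eta exp(..) \<le> exp(d/2).\<close>
definition exp_controlled :: "real \<Rightarrow> real^'n^'n \<Rightarrow> (real^'n) measure \<Rightarrow> bool" where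
  "exp_controlled p S \<eta> \<longleftrightarrow>
     (INF \<theta>'. \<integral>\<^sup>+ \<theta>. ennreal (exp (mnorm S (\<theta> - \<theta>') powr p)) \<partial>\<eta>)
       \<le> ennreal (exp (real CARD('n) / 2))"

text \<open>KL(zeta || eta) = int log (d zeta / d eta) d zeta, in [0,\<infinity>]. The negative part
  of the integrand is always zeta-integrable, so non-integrability means the value \<infinity>.\<close>
definition KL :: "'a measure \<Rightarrow> 'a measure \<Rightarrow> ereal" where
  "KL \<zeta> \<eta> =
     (if integrable \<zeta> (\<lambda>x. ln (enn2real (RN_deriv \<eta> \<zeta> x)))
      then ereal (\<integral>x. ln (enn2real (RN_deriv \<eta> \<zeta> x)) \<partial>\<zeta>) else \<infinity>)"

end

theory Submission
  imports Defs
begin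


lemma pd_invertible:
  fixes S :: "real^'n^'n"
  assumes "pos_def_mat S"
  shows "invertible S"
proof -
  have "inj ((*v) S)"
  proof (rule injI)
    fix x y assume "S *v x = S *v y"
    hence "S *v (x - y) = 0" by (simp add: matrix_vector_mult_diff_distrib)
    hence "(x - y) \<bullet> (S *v (x - y)) = 0" by simp
    thus "x = y" using assms unfolding pos_def_mat_def by (metis less_irrefl right_minus_eq)
  qed
  then obtain B where "B ** S = mat 1" using matrix_left_invertible_injective by blast
  thus ?thesis using invertible_left_inverse by blast
qed

lemma pd_inv:
  fixes S :: "real^'n^'n"
  assumes "pos_def_mat S"
  shows "S ** matrix_inv S = mat 1" "matrix_inv S ** S = mat 1"
proof -
  have "\<exists>A'. S ** A' = mat 1 \<and> A' ** S = mat 1" using pd_invertible[OF assms] invertible_def by blast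
  hence "S ** matrix_inv S = mat 1 \<and> matrix_inv S ** S = mat 1"
    unfolding matrix_inv_def by (rule someI_ex)
  thus "S ** matrix_inv S = mat 1" "matrix_inv S ** S = mat 1" by auto
qed

definition bform :: "real^'n^'n \<Rightarrow> real^'n \<Rightarrow> real^'n \<Rightarrow> real" where
  "bform S u v = u \<bullet> (matrix_inv S *v v)"

lemma bform_repr:
  fixes S :: "real^'n^'n"
  assumes "pos_def_mat S"
  shows "bform S u v = (matrix_inv S *v u) \<bullet> (S *v (matrix_inv S *v v))"
proof -
  have "u = S *v (matrix_inv S *v u)" using pd_inv[OF assms] by (simp add: matrix_vector_mul_assoc)
  hence "bform S u v = (S *v (matrix_inv S *v u)) \<bullet> (matrix_inv S *v v)" unfolding bform_def by metis
  also have "\<dots> = (matrix_inv S *v u) \<bullet> (S *v (matrix_inv S *v v))"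
  proof -
    have "transpose S = S" using assms pos_def_mat_def by blast
    hence "S *v (matrix_inv S *v u) = (matrix_inv S *v u) v* S" by (metis transpose_matrix_vector)
    thus ?thesis by (simp add: dot_lmul_matrix)
  qed
  finally show ?thesis .
qed

lemma bform_sym:
  fixes S :: "real^'n^'n"
  assumes "pos_def_mat S"
  shows "bform S u v = bform S v u"
proof -
  have "transpose S = S" using assms pos_def_mat_def by blast
  have "bform S u v = (matrix_inv S *v u) \<bullet> (S *v (matrix_inv S *v v))" by (rule bform_repr[OF assms])
  also have "\<dots> = ((matrix_inv S *v u) v* S) \<bullet> (matrix_inv S *v v)" by (simp add: dot_lmul_matrix)
  also have "\<dots> = (S *v (matrix_inv S *v u)) \<bullet> (matrix_inv S *v v)"
    by (metis \<open>transpose S = S\<close> vector_transpose_matrix)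
  also have "\<dots> = (matrix_inv S *v v) \<bullet> (S *v (matrix_inv S *v u))" by (simp add: inner_commute)
  also have "\<dots> = bform S v u" by (rule bform_repr[OF assms, symmetric])
  finally show ?thesis .
qed

lemma bform_nonneg:
  fixes S :: "real^'n^'n"
  assumes "pos_def_mat S"
  shows "0 \<le> bform S u u"
proof -
  have "bform S u u = (matrix_inv S *v u) \<bullet> (S *v (matrix_inv S *v u))" by (rule bform_repr[OF assms])
  moreover have "\<And>x. 0 \<le> x \<bullet> (S *v x)"
    using assms unfolding pos_def_mat_def by (metis order.strict_implies_order inner_zero_left order_refl)
  ultimately show ?thesis by simp
qed

lemma bform_add_left: "bform S (u + w) v = bform S u v + bform S w v"
  by (simp add: bform_def inner_add_left)
lemma bform_add_right: "bform S u (v + w) = bform S u v + bform S u w"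
  by (simp add: bform_def inner_add_right matrix_vector_right_distrib)
lemma bform_scale_left: "bform S (c *\<^sub>R u) v = c * bform S u v"
  by (simp add: bform_def)
lemma bform_scale_right: "bform S u (c *\<^sub>R v) = c * bform S u v"
  by (simp add: bform_def matrix_vector_mult_scaleR)

lemma bform_quad:
  fixes S :: "real^'n^'n"
  assumes "pos_def_mat S"
  shows "bform S (a *\<^sub>R u + b *\<^sub>R v) (a *\<^sub>R u + b *\<^sub>R v) = a^2 * bform S u u + 2*a*b * bform S u v + b^2 * bform S v v"
  using bform_sym[OF assms, of v u]
  by (simp add: bform_add_left bform_add_right bform_scale_left bform_scale_right power2_eq_square algebra_simps)

lemma bform_cs:
  fixes S :: "real^'n^'n"
  assumes pd: "pos_def_mat S"
  shows "bform S u v \<le> sqrt (bform S u u) * sqrt (bform S v v)"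
proof -
  let ?a = "bform S u u" and ?b = "bform S v v" and ?c = "bform S u v"
  have a0: "0 \<le> ?a" and b0: "0 \<le> ?b" using bform_nonneg[OF pd] by auto
  have q: "\<And>x y. 0 \<le> x^2 * ?a + 2*x*y * ?c + y^2 * ?b"
    using bform_quad[OF pd] bform_nonneg[OF pd] by metis
  show ?thesis
  proof (cases "?a = 0 \<or> ?b = 0")
    case True
    have "?c \<le> 0"
    proof (rule ccontr)
      assume c: "\<not> ?c \<le> 0"
      show False
      proof (cases "?a = 0")
        case True
        have "0 \<le> ((?b+1)/(2*?c))^2 * ?a + 2*((?b+1)/(2*?c))*(-1) * ?c + (-1)^2 * ?b" by (rule q)
        thus False using True c by (simp add: field_simps power2_eq_square)
      next
        case False
        hence "?b = 0" using True by simp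
        have "0 \<le> (-1)^2 * ?a + 2*(-1)*((?a+1)/(2*?c)) * ?c + ((?a+1)/(2*?c))^2 * ?b" by (rule q)
        thus False using \<open>?b = 0\<close> c by (simp add: field_simps power2_eq_square)
      qed
    qed
    moreover have "0 \<le> sqrt ?a * sqrt ?b" using a0 b0 by simp
    ultimately show ?thesis by linarith
  next
    case False
    hence ap: "0 < ?a" "0 < ?b" using a0 b0 by auto
    have "0 \<le> (sqrt ?b)^2 * ?a + 2*(sqrt ?b)*(-sqrt ?a) * ?c + (-sqrt ?a)^2 * ?b" by (rule q)
    hence h1: "0 \<le> 2 * ?a * ?b - 2 * (sqrt ?a * sqrt ?b) * ?c" using a0 b0 by (simp add: algebra_simps)
    define s where "s = sqrt ?a * sqrt ?b"
    have sa: "sqrt ?a * sqrt ?a = ?a" using a0 by simp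
    have sb: "sqrt ?b * sqrt ?b = ?b" using b0 by simp
    have "s * s = (sqrt ?a * sqrt ?a) * (sqrt ?b * sqrt ?b)" unfolding s_def by (simp only: ac_simps)
    hence ss: "?a * ?b = s * s" unfolding sa sb by simp
    have s0: "0 < s" unfolding s_def using ap by simp
    have h2: "0 \<le> 2 * (s * s) - 2 * s * ?c" using h1 ss unfolding s_def[symmetric] by (simp only: mult.assoc)
    hence "s * ?c \<le> s * s" by linarith
    hence "?c \<le> s" using s0 by (rule mult_left_le_imp_le)
    thus ?thesis unfolding s_def .
  qed
qed

lemma mnorm_bform: "mnorm S v = sqrt (bform S v v)"
  by (simp add: mnorm_def bform_def)

lemma mnorm_nonneg: "pos_def_mat S \<Longrightarrow> 0 \<le> mnorm S v" by (simp add: mnorm_bform bform_nonneg)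

lemma mnorm_triangle:
  fixes S :: "real^'n^'n"
  assumes pd: "pos_def_mat S"
  shows "mnorm S (u + v) \<le> mnorm S u + mnorm S v"
proof -
  have "bform S (u+v) (u+v) = bform S u u + 2 * bform S u v + bform S v v"
    using bform_sym[OF pd, of v u] by (simp add: bform_add_left bform_add_right)
  also have "\<dots> \<le> bform S u u + 2 * (sqrt (bform S u u) * sqrt (bform S v v)) + bform S v v"
    using bform_cs[OF pd, of u v] by simp
  also have "\<dots> = (sqrt (bform S u u) + sqrt (bform S v v))^2"
    using bform_nonneg[OF pd, of u] bform_nonneg[OF pd, of v] by (simp add: power2_eq_square algebra_simps)
  finally show ?thesis unfolding mnorm_bform
    by (simp add: real_sqrt_le_iff real_le_lsqrt bform_nonneg[OF pd])
qed

lemma mnorm_minus: "mnorm S (- v) = mnorm S v"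
proof -
  have "bform S (- v) (- v) = bform S ((-1) *\<^sub>R v) ((-1) *\<^sub>R v)" by simp
  also have "\<dots> = (-1) * ((-1) * bform S v v)" by (simp only: bform_scale_left bform_scale_right)
  finally have "bform S (- v) (- v) = bform S v v" by simp
  thus ?thesis by (simp add: mnorm_bform)
qed

lemma mnorm_zero: "mnorm S 0 = 0"
  by (simp add: mnorm_def)

lemma mnorm_dist_tri:
  fixes S :: "real^'n^'n"
  assumes pd: "pos_def_mat S"
  shows "mnorm S (x - y) \<le> mnorm S (x - z) + mnorm S (y - z)"
proof -
  have "mnorm S (x - y) = mnorm S ((x - z) + (- (y - z)))" by (simp add: algebra_simps)
  also have "\<dots> \<le> mnorm S (x - z) + mnorm S (- (y - z))" by (rule mnorm_triangle[OF pd])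
  finally show ?thesis by (metis minus_diff_eq mnorm_minus)
qed


lemma fenchel:
  fixes x y :: real
  assumes "0 \<le> y"
  shows "y * x \<le> y * ln y - y + exp x"
proof (cases "y = 0")
  case True thus ?thesis by simp
next
  case False
  hence yp: "0 < y" using assms by simp
  have "1 + (x - ln y) \<le> exp (x - ln y)" by (rule exp_ge_add_one_self)
  also have "\<dots> = exp x / y" using yp by (simp add: exp_diff)
  finally have "y * (1 + (x - ln y)) \<le> exp x" using yp by (simp add: field_simps)
  thus ?thesis by (simp add: algebra_simps)
qed

lemma sinh_ge: "0 \<le> (a::real) \<Longrightarrow> exp (-a) + a \<le> exp a - a"
proof -
  assume a: "0 \<le> a"
  define F where "F = (\<lambda>x::real. exp x - exp (-x) - 2*x)"
  have "F 0 \<le> F a"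
  proof (rule DERIV_nonneg_imp_nondecreasing[OF a])
    fix x :: real assume "0 \<le> x" "x \<le> a"
    have "(F has_real_derivative (exp x + exp (-x) - 2)) (at x)"
      unfolding F_def by (auto intro!: derivative_eq_intros)
    moreover have "exp x + exp (-x) - 2 \<ge> 0"
    proof -
      have "exp x * exp (-x) = 1" by (simp add: exp_minus_inverse)
      moreover have "0 \<le> (exp x - exp (-x))^2" by simp
      ultimately have "4 \<le> (exp x + exp (-x))^2" by (simp add: power2_eq_square algebra_simps)
      moreover have "0 \<le> exp x + exp (-x)" by (simp add: add_nonneg_nonneg)
      ultimately have "2 \<le> exp x + exp (-x)"
      proof -
        have "(2::real)^2 \<le> (exp x + exp (-x))^2" using \<open>4 \<le> (exp x + exp (-x))^2\<close> by simp
        thus ?thesis using \<open>0 \<le> exp x + exp (-x)\<close> by (rule power2_le_imp_le)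
      qed
      thus ?thesis by simp
    qed
    ultimately show "\<exists>y. (F has_real_derivative y) (at x) \<and> 0 \<le> y" by blast
  qed
  thus ?thesis unfolding F_def by simp
qed

lemma pw1:
  fixes r y t :: real
  assumes "0 \<le> r" "0 \<le> y" "0 \<le> t"
  shows "t * r * \<bar>y - 1\<bar> \<le> (y * ln y - y + 1) + (exp (t*r) - 1 - t*r)"
proof (cases "1 \<le> y")
  case True
  have "y * (t*r) \<le> y * ln y - y + exp (t*r)" by (rule fenchel[OF assms(2)])
  thus ?thesis using True by (simp add: algebra_simps)
next
  case False
  have "y * (-(t*r)) \<le> y * ln y - y + exp (-(t*r))" by (rule fenchel[OF assms(2)])
  moreover have "exp (-(t*r)) + t*r \<le> exp (t*r) - t*r" using sinh_ge[of "t*r"] assms by simp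
  ultimately show ?thesis using False by (simp add: algebra_simps)
qed

lemma pwA:
  fixes r y L :: real
  assumes "0 \<le> r" "0 \<le> y"
  shows "r * \<bar>y - 1\<bar> + 2 \<le> (y * ln y - y + 1) + 2 * exp (-L) * exp r + L * y + L"
proof -
  have "y * (r - L) \<le> y * ln y - y + exp (r - L)" by (rule fenchel[OF assms(2)])
  moreover have "1 + (r - L) \<le> exp (r - L)" by (rule exp_ge_add_one_self)
  moreover have "exp (r - L) = exp (-L) * exp r" by (simp add: exp_diff exp_minus field_simps)
  moreover have "r * \<bar>y - 1\<bar> \<le> r * y + r" using assms by (cases "1 \<le> y") (auto simp: algebra_simps)
  ultimately show ?thesis by (simp add: algebra_simps)
qed

lemma exp_cubic:
  fixes x :: real
  assumes "0 \<le> x" "x \<le> 1"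
  shows "exp x \<le> 1 + x + x^2/2 + x^3/2"
proof -
  obtain s where s: "\<bar>s\<bar> \<le> \<bar>x\<bar>" "exp x = (\<Sum>m<3. (x ^ m) / fact m) + (exp s / fact 3) * x ^ 3"
    using Maclaurin_exp_le[of x 3] by blast
  have "exp s \<le> exp 1" using s(1) assms by simp
  also have "\<dots> \<le> 3" by (rule exp_le)
  finally have "exp s / 6 * x^3 \<le> 3 / 6 * x^3" using assms by (intro mult_right_mono) auto
  moreover have "(\<Sum>m<3. (x ^ m) / fact m) = 1 + x + x^2/2"
    by (simp add: eval_nat_numeral fact_numeral)
  moreover have "(fact 3 :: real) = 6" by (simp add: fact_numeral)
  ultimately show ?thesis using s(2) by simp
qed

lemma tangent_bound:
  fixes t L r :: real
  assumes t0: "0 < t" and t1: "t \<le> 1/3" and L0: "0 < L" and r0: "0 \<le> r"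
  shows "exp (t*r) - 1 - t*r \<le> (exp (t*(L+3/2)) - 1 - t*(L+3/2))
           + (t * (exp (t*(L+3/2)) - 1) * exp (-L)) * (exp r - exp L)"
proof -
  define k :: real where "k = 3/2"
  define c where "c = exp (t*k)"
  define B where "B = t * (exp (t*(L+k)) - 1) * exp (-L)"
  define \<phi> where "\<phi> = (\<lambda>y::real. B*y + t * ln y - c * y powr t)"
  define \<phi>' where "\<phi>' = (\<lambda>y::real. B + t * inverse y - (c * t) * y powr (t - 1))"
  define \<phi>'' where "\<phi>'' = (\<lambda>y::real. - t / y^2 - c * t * (t - 1) * y powr (t - 2))"
  have ck: "1 \<le> (1 - t) * c"
  proof -
    have "1 + t*k \<le> exp (t*k)" by (rule exp_ge_add_one_self)
    hence "(1 - t) * (1 + t*k) \<le> (1 - t) * exp (t*k)" using t1 by (intro mult_left_mono) auto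
    moreover have "1 \<le> (1 - t) * (1 + t*k)" using t0 t1 unfolding k_def by (simp add: algebra_simps)
    ultimately show ?thesis unfolding c_def by simp
  qed
  have d1: "(\<phi> has_real_derivative \<phi>' y) (at y)" if "y \<in> {1..}" for y
  proof -
    have yp: "0 < y" using that by simp
    show ?thesis unfolding \<phi>_def \<phi>'_def
      using yp by (auto intro!: derivative_eq_intros simp: powr_diff divide_inverse)
  qed
  have d2: "(\<phi>' has_real_derivative \<phi>'' y) (at y)" if "y \<in> {1..}" for y
  proof -
    have yp: "0 < y" using that by simp
    have d: "((\<lambda>y. y powr (t - 1)) has_real_derivative ((t - 1) * y powr (t - 1 - 1))) (at y)"
      by (rule has_real_derivative_powr[OF yp])
    have di: "((\<lambda>y. inverse y) has_real_derivative (- (inverse y ^ Suc (Suc 0)))) (at y)"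
      by (rule DERIV_inverse) (use yp in auto)
    have "(\<phi>' has_real_derivative (0 + t * (- (inverse y ^ Suc (Suc 0))) - (c * t) * ((t - 1) * y powr (t - 1 - 1)))) (at y)"
      unfolding \<phi>'_def by (rule DERIV_diff DERIV_add DERIV_const DERIV_cmult di d)+
    thus ?thesis unfolding \<phi>''_def by (simp add: algebra_simps power2_eq_square divide_inverse)
  qed
  have d3: "0 \<le> \<phi>'' y" if "y \<in> {1..}" for y
  proof -
    have y1: "1 \<le> y" using that by simp
    hence "1 \<le> y powr t" using t0 by (simp add: ge_one_powr_ge_zero)
    hence "1 \<le> (1 - t) * c * y powr t" using ck
      by (metis mult_mono mult_1_right zero_le_one order_trans)
    hence "t * 1 \<le> t * ((1 - t) * c * y powr t)" using t0 by (intro mult_left_mono) auto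
    hence "t / y^2 \<le> (t * ((1 - t) * c * y powr t)) / y^2" by (simp add: divide_right_mono)
    moreover have "y powr (t - 2) = y powr t / y^2" using y1 by (simp add: powr_diff)
    ultimately have "t / y^2 \<le> c * t * (1 - t) * y powr (t - 2)"
      by (simp add: algebra_simps)
    thus ?thesis unfolding \<phi>''_def by (simp add: algebra_simps)
  qed
  have cvx: "convex_on {1..} \<phi>"
    by (rule f''_ge0_imp_convex[OF _ d1 d2 d3]) (auto simp: convex_real_interval)
  have cL: "exp L \<in> interior {1..}" using L0 by simp
  have der0: "\<phi>' (exp L) = 0"
  proof -
    have "(exp L) powr (t - 1) = exp ((t - 1) * L)" by (simp add: powr_def)
    moreover have "c * exp ((t - 1) * L) = exp (t*(L+k)) * exp (-L)"
      unfolding c_def by (simp add: exp_add[symmetric] algebra_simps)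
    ultimately show ?thesis unfolding \<phi>'_def B_def by (simp add: exp_minus algebra_simps)
  qed
  have y1: "exp r \<in> {1..}" using r0 by simp
  have "\<phi> (exp r) - \<phi> (exp L) \<ge> \<phi>' (exp L) * (exp r - exp L)"
    by (rule convex_on_imp_above_tangent[OF cvx _ cL y1])
       (use d1[of "exp L"] L0 in \<open>auto intro: has_field_derivative_at_within simp: connected_Ici\<close>)
  hence main: "\<phi> (exp L) \<le> \<phi> (exp r)" using der0 by simp
  have e1: "c * (exp r) powr t = exp (t*(r+k))" unfolding c_def by (simp add: powr_def exp_add[symmetric] algebra_simps)
  have e2: "c * (exp L) powr t = exp (t*(L+k))" unfolding c_def by (simp add: powr_def exp_add[symmetric] algebra_simps)
  from main have "exp (t*(r+k)) - 1 - t*(r+k) \<le> (exp (t*(L+k)) - 1 - t*(L+k)) + B * (exp r - exp L)"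
    unfolding \<phi>_def using e1 e2 by (simp add: algebra_simps)
  moreover have "exp (t*r) - 1 - t*r \<le> exp (t*(r+k)) - 1 - t*(r+k)"
  proof -
    have a: "t*k \<le> exp (t*k) - 1" using exp_ge_add_one_self[of "t*k"] by linarith
    have e1: "1 \<le> exp (t*r)" using t0 r0 by simp
    have "exp (t*r) * (t*k) \<le> exp (t*r) * (exp (t*k) - 1)" by (rule mult_left_mono[OF a]) simp
    moreover have "1 * (t*k) \<le> exp (t*r) * (t*k)" by (rule mult_right_mono[OF e1]) (use t0 k_def in simp)
    ultimately have "exp (t*r) + t*k \<le> exp (t*r) * exp (t*k)" by (simp add: algebra_simps)
    thus ?thesis by (simp add: exp_add[symmetric] algebra_simps)
  qed
  ultimately show ?thesis unfolding B_def k_def by simp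
qed


lemma caseB_real:
  fixes L H H' :: real
  assumes L0: "0 < L" and H'0: "0 < H'" and HH: "H \<le> H'"
    and nA: "\<not> (2*L \<le> (2+2*L)*H' + (3+2*L)* sqrt (H'/2))"
  defines "\<tau> \<equiv> sqrt (2*H')"
  defines "t \<equiv> \<tau> / (L + 3/2)"
  shows "0 < t" "t \<le> 1/3"
    "(H + (exp (t*(L+3/2)) - 1 - t*(L+3/2))) / t \<le> (3+2*L)*(H' + sqrt (H'/2))"
proof -
  have tau0: "0 < \<tau>" unfolding \<tau>_def using H'0 by simp
  have H'eq: "H' = \<tau>^2/2" unfolding \<tau>_def using H'0 by simp
  have sq: "sqrt (H'/2) = \<tau>/2"
  proof -
    have "H'/2 = (\<tau>/2)^2" using H'eq by (simp add: power2_eq_square)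
    thus ?thesis using tau0 by simp
  qed
  have e1: "(2+2*L)*H' = (1+L)*\<tau>^2" using H'eq by (simp add: algebra_simps)
  have e2: "(3+2*L) * sqrt (H'/2) = (3/2+L)*\<tau>" using sq by (simp add: algebra_simps)
  have c: "(1+L)*\<tau>^2 + (3/2+L)*\<tau> < 2*L"
    using nA unfolding e1 e2 by linarith
  have tau1: "\<tau> < 1"
  proof (rule ccontr)
    assume "\<not> \<tau> < 1"
    hence "1 \<le> \<tau>" by simp
    hence "1 \<le> \<tau>^2" by (simp add: one_le_power)
    hence "(1+L)*1 \<le> (1+L)*\<tau>^2" using L0 by (intro mult_left_mono) auto
    moreover have "(3/2+L)*1 \<le> (3/2+L)*\<tau>" using \<open>1 \<le> \<tau>\<close> L0 by (intro mult_left_mono) auto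
    ultimately show False using c by simp
  qed
  have Lp: "0 < L + 3/2" using L0 by simp
  show "0 < t" unfolding t_def using tau0 Lp by simp
  have "0 \<le> (1+L)*\<tau>^2" using L0 by simp
  hence "(3/2+L)*\<tau> < 2*L" using c by linarith
  hence "\<tau> < 2*L/(L+3/2)" using Lp by (simp add: field_simps)
  hence "\<tau> / (L+3/2) < (2*L/(L+3/2)) / (L+3/2)" using Lp by (rule divide_strict_right_mono)
  hence "t < 2*L/(L+3/2)^2" unfolding t_def by (simp add: power2_eq_square)
  also have "\<dots> \<le> 1/3"
  proof -
    have "(L+3/2)^2 - 6*L = (L - 3/2)^2" by (simp add: power2_eq_square algebra_simps)
    moreover have "0 \<le> (L - 3/2)^2" by simp
    ultimately have "6*L \<le> (L+3/2)^2" by linarith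
    thus ?thesis using Lp by (simp add: field_simps)
  qed
  finally show "t \<le> 1/3" by simp
  have tt: "t*(L+3/2) = \<tau>" unfolding t_def using Lp by simp
  have ecub: "exp \<tau> \<le> 1 + \<tau> + \<tau>^2/2 + \<tau>^3/2" by (rule exp_cubic) (use tau0 tau1 in auto)
  have "(H + (exp (t*(L+3/2)) - 1 - t*(L+3/2))) / t = (H + (exp \<tau> - 1 - \<tau>)) * (L+3/2) / \<tau>"
    unfolding tt unfolding t_def using Lp tau0 by (simp add: field_simps)
  also have "\<dots> \<le> (\<tau>^2/2 + \<tau>^2/2 + \<tau>^3/2) * (L+3/2) / \<tau>"
    using ecub HH H'eq Lp tau0 by (intro divide_right_mono mult_right_mono) auto
  also have "\<dots> = (L+3/2) * (\<tau> + \<tau>^2/2)" using tau0 by (simp add: field_simps power2_eq_square power3_eq_cube)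
  also have "\<dots> \<le> (L+3/2) * (\<tau> + \<tau>^2)" using Lp by (intro mult_left_mono) auto
  also have "\<dots> = (3+2*L)*(\<tau>^2/2 + \<tau>/2)" by (simp add: algebra_simps power2_eq_square)
  also have "\<dots> = (3+2*L)*(H' + sqrt (H'/2))" by (subst sq, subst H'eq, rule refl)
  finally show "(H + (exp (t*(L+3/2)) - 1 - t*(L+3/2))) / t \<le> (3+2*L)*(H' + sqrt (H'/2))" .
qed

locale dens_setup =
  fixes M N :: "'a measure"
  assumes M: "prob_space M" and N: "prob_space N"
    and sN: "sets N = sets M" and ac: "absolutely_continuous M N"
begin

definition g :: "'a \<Rightarrow> real" where "g x = enn2real (RN_deriv M N x)"

lemma g_meas[measurable]: "g \<in> borel_measurable M"
  unfolding g_def by measurable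

lemma g_nonneg: "0 \<le> g x" unfolding g_def by simp

lemma dens: "density M (\<lambda>x. ennreal (g x)) = N"
proof -
  interpret M: prob_space M by (rule M)
  interpret N: prob_space N by (rule N)
  have fin: "AE x in M. RN_deriv M N x \<noteq> \<infinity>"
    by (rule M.RN_deriv_finite[OF _ ac sN]) (rule N.sigma_finite_measure_axioms)
  have "density M (\<lambda>x. ennreal (g x)) = density M (RN_deriv M N)"
    by (rule density_cong) (use fin in \<open>auto simp: g_def ennreal_enn2real_if\<close>)
  also have "\<dots> = N" by (rule M.density_RN_deriv[OF ac sN])
  finally show ?thesis .
qed

lemma emeasure_N: "A \<in> sets M \<Longrightarrow> emeasure N A = (\<integral>\<^sup>+ x. ennreal (g x) * indicator A x \<partial>M)"
  by (subst dens[symmetric]) (simp add: emeasure_density)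

lemma nn_g: "(\<integral>\<^sup>+ x. ennreal (g x) \<partial>M) = 1"
proof -
  interpret N: prob_space N by (rule N)
  have "emeasure N (space M) = 1" using N.emeasure_space_1 sets_eq_imp_space_eq[OF sN] by simp
  moreover have "(\<integral>\<^sup>+ x. ennreal (g x) * indicator (space M) x \<partial>M) = (\<integral>\<^sup>+ x. ennreal (g x) \<partial>M)"
    by (rule nn_integral_cong) simp
  ultimately show ?thesis using emeasure_N[of "space M"] by simp
qed

lemma g_int: "integrable M g"
  by (rule integrableI_nonneg) (auto simp: g_nonneg nn_g)

lemma int_g: "(\<integral>x. g x \<partial>M) = 1"
  by (subst integral_eq_nn_integral) (auto simp: g_nonneg nn_g)

lemma KL_int:
  assumes "integrable N (\<lambda>x. ln (g x))"
  shows "integrable M (\<lambda>x. g x * ln (g x))"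
    and "(\<integral>x. ln (g x) \<partial>N) = (\<integral>x. g x * ln (g x) \<partial>M)"
proof -
  have "integrable (density M (\<lambda>x. ennreal (g x))) (\<lambda>x. ln (g x))" using assms dens by simp
  thus "integrable M (\<lambda>x. g x * ln (g x))"
    using integrable_density[of "\<lambda>x. ln (g x)" M g] g_nonneg by simp
  have "(\<integral>x. ln (g x) \<partial>N) = (\<integral>x. ln (g x) \<partial>(density M (\<lambda>x. ennreal (g x))))" using dens by simp
  also have "\<dots> = (\<integral>x. g x * ln (g x) \<partial>M)"
    using integral_density[of "\<lambda>x. ln (g x)" M g] g_nonneg by simp
  finally show "(\<integral>x. ln (g x) \<partial>N) = (\<integral>x. g x * ln (g x) \<partial>M)" .
qed

lemma ent_nonneg: "0 \<le> g x * ln (g x) - g x + 1"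
  using fenchel[of "g x" 0] g_nonneg by simp

lemma entropy_nn:
  assumes "integrable N (\<lambda>x. ln (g x))"
  shows "(\<integral>\<^sup>+ x. ennreal (g x * ln (g x) - g x + 1) \<partial>M) = ennreal (\<integral>x. ln (g x) \<partial>N)"
proof -
  interpret M: prob_space M by (rule M)
  have i1: "integrable M (\<lambda>x. g x * ln (g x))" by (rule KL_int(1)[OF assms])
  have i: "integrable M (\<lambda>x. g x * ln (g x) - g x + 1)"
    using i1 g_int by auto
  have "(\<integral>\<^sup>+ x. ennreal (g x * ln (g x) - g x + 1) \<partial>M) = ennreal (\<integral>x. g x * ln (g x) - g x + 1 \<partial>M)"
    by (rule nn_integral_eq_integral[OF i]) (simp add: ent_nonneg)
  also have "(\<integral>x. g x * ln (g x) - g x + 1 \<partial>M) = (\<integral>x. g x * ln (g x) \<partial>M) - (\<integral>x. g x \<partial>M) + 1"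
    using i1 g_int by (simp add: integral_add integral_diff M.prob_space)
  also have "\<dots> = (\<integral>x. ln (g x) \<partial>N)" using KL_int(2)[OF assms] int_g by simp
  finally show ?thesis .
qed

lemma H_nonneg:
  assumes "integrable N (\<lambda>x. ln (g x))"
  shows "0 \<le> (\<integral>x. ln (g x) \<partial>N)"
proof -
  have "ennreal (\<integral>x. ln (g x) \<partial>N) = (\<integral>\<^sup>+ x. ennreal (g x * ln (g x) - g x + 1) \<partial>M)"
    by (rule entropy_nn[OF assms, symmetric])
  moreover have "(\<integral>x. ln (g x) \<partial>N) = (\<integral>x. g x * ln (g x) - g x + 1 \<partial>M)"
  proof -
    interpret M: prob_space M by (rule M)
    have i1: "integrable M (\<lambda>x. g x * ln (g x))" by (rule KL_int(1)[OF assms])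
    have "(\<integral>x. g x * ln (g x) - g x + 1 \<partial>M) = (\<integral>x. g x * ln (g x) \<partial>M) - (\<integral>x. g x \<partial>M) + 1"
      using i1 g_int by (simp add: integral_add integral_diff M.prob_space)
    thus ?thesis using KL_int(2)[OF assms] int_g by simp
  qed
  moreover have "0 \<le> (\<integral>x. g x * ln (g x) - g x + 1 \<partial>M)"
    by (rule integral_nonneg_AE) (simp add: ent_nonneg)
  ultimately show ?thesis by simp
qed

lemma integrate_bound:
  fixes F :: "'a \<Rightarrow> ennreal" and u v w :: "'a \<Rightarrow> real"
  assumes [measurable]: "F \<in> borel_measurable M" "u \<in> borel_measurable M" "v \<in> borel_measurable M" "w \<in> borel_measurable M"
    and pw: "\<And>x. x \<in> space M \<Longrightarrow> F x + a \<le> ennreal (u x) + b + c * ennreal (v x) + d * ennreal (w x)"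
  shows "(\<integral>\<^sup>+x. F x \<partial>M) + a \<le> (\<integral>\<^sup>+x. ennreal (u x) \<partial>M) + b + c * (\<integral>\<^sup>+x. ennreal (v x) \<partial>M) + d * (\<integral>\<^sup>+x. ennreal (w x) \<partial>M)"
proof -
  interpret M: prob_space M by (rule M)
  have "(\<integral>\<^sup>+x. F x \<partial>M) + a = (\<integral>\<^sup>+x. F x + a \<partial>M)"
    by (simp add: nn_integral_add M.emeasure_space_1)
  also have "\<dots> \<le> (\<integral>\<^sup>+x. ennreal (u x) + b + c * ennreal (v x) + d * ennreal (w x) \<partial>M)"
    by (rule nn_integral_mono) (rule pw)
  also have "\<dots> = (\<integral>\<^sup>+x. ennreal (u x) \<partial>M) + b + c * (\<integral>\<^sup>+x. ennreal (v x) \<partial>M) + d * (\<integral>\<^sup>+x. ennreal (w x) \<partial>M)"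
    by (simp add: nn_integral_add nn_integral_cmult M.emeasure_space_1)
  finally show ?thesis .
qed


lemma key:
  fixes \<rho> :: "'a \<Rightarrow> real" and L H' :: real
  assumes [measurable]: "\<rho> \<in> borel_measurable M" and r0: "\<And>x. 0 \<le> \<rho> x"
    and Z: "(\<integral>\<^sup>+ x. ennreal (exp (\<rho> x)) \<partial>M) \<le> ennreal (exp L)" and L0: "0 < L"
    and int: "integrable N (\<lambda>x. ln (g x))"
    and HH: "(\<integral>x. ln (g x) \<partial>N) \<le> H'" and H'0: "0 < H'"
  shows "(\<integral>\<^sup>+ x. ennreal (\<rho> x * \<bar>g x - 1\<bar>) \<partial>M) \<le> ennreal ((3+2*L)*(H' + sqrt (H'/2)))"
proof -
  interpret M: prob_space M by (rule M)
  define H where "H = (\<integral>x. ln (g x) \<partial>N)"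
  define X where "X = (\<integral>\<^sup>+ x. ennreal (\<rho> x * \<bar>g x - 1\<bar>) \<partial>M)"
  have E: "(\<integral>\<^sup>+ x. ennreal (g x * ln (g x) - g x + 1) \<partial>M) = ennreal H"
    unfolding H_def by (rule entropy_nn[OF int])
  have HH': "H \<le> H'" using HH H_def by simp
  have tgt0: "0 \<le> (3+2*L)*(H' + sqrt (H'/2))" using L0 H'0 by simp
  show ?thesis
  proof (cases "2*L \<le> (2+2*L)*H' + (3+2*L)* sqrt (H'/2)")
    case True
    have "X + 2 \<le> (\<integral>\<^sup>+x. ennreal (g x * ln (g x) - g x + 1) \<partial>M) + ennreal L
        + ennreal (2 * exp (-L)) * (\<integral>\<^sup>+x. ennreal (exp (\<rho> x)) \<partial>M) + ennreal L * (\<integral>\<^sup>+x. ennreal (g x) \<partial>M)"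
      unfolding X_def
    proof (rule integrate_bound)
      fix x assume "x \<in> space M"
      have pw: "\<rho> x * \<bar>g x - 1\<bar> + 2 \<le> (g x * ln (g x) - g x + 1) + 2 * exp (-L) * exp (\<rho> x) + L * g x + L"
        by (rule pwA[OF r0 g_nonneg])
      have "ennreal (\<rho> x * \<bar>g x - 1\<bar>) + 2 = ennreal (\<rho> x * \<bar>g x - 1\<bar> + 2)"
        using r0[of x] by (subst ennreal_plus) auto
      also have "\<dots> \<le> ennreal ((g x * ln (g x) - g x + 1) + L + 2 * exp (-L) * exp (\<rho> x) + L * g x)"
        using pw by (intro ennreal_leI) simp
      also have "\<dots> = ennreal (g x * ln (g x) - g x + 1) + ennreal L + ennreal (2 * exp (-L)) * ennreal (exp (\<rho> x)) + ennreal L * ennreal (g x)"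
        using ent_nonneg[of x] L0 g_nonneg[of x]
        by (simp add: ennreal_mult[symmetric] ennreal_plus[symmetric] del: ennreal_plus)
      finally show "ennreal (\<rho> x * \<bar>g x - 1\<bar>) + 2 \<le> ennreal (g x * ln (g x) - g x + 1) + ennreal L + ennreal (2 * exp (-L)) * ennreal (exp (\<rho> x)) + ennreal L * ennreal (g x)" .
    qed (auto simp: ent_nonneg)
    also have "\<dots> \<le> ennreal H + ennreal L + ennreal (2 * exp (-L)) * ennreal (exp L) + ennreal L * 1"
      unfolding E nn_g by (intro add_mono mult_left_mono Z order_refl) auto
    also have "\<dots> = ennreal (H + 2*L) + 2"
    proof -
      have h2: "2 * exp (-L) * exp L = 2" by (simp add: exp_minus)
      have "ennreal (2 * exp (-L)) * ennreal (exp L) = ennreal (2 * exp (-L) * exp L)"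
        by (rule ennreal_mult[symmetric]) auto
      hence "ennreal (2 * exp (-L)) * ennreal (exp L) = 2" unfolding h2 by simp
      moreover have "0 \<le> H" unfolding H_def by (rule H_nonneg[OF int])
      ultimately show ?thesis using L0 by (simp add: ennreal_plus[symmetric] del: ennreal_plus add: algebra_simps)
    qed
    finally have "X + 2 \<le> ennreal (H + 2*L) + 2" .
    hence "X \<le> ennreal (H + 2*L)" by (simp add: ennreal_add_left_cancel_le add.commute[of _ 2])
    also have "\<dots> \<le> ennreal ((3+2*L)*(H' + sqrt (H'/2)))"
    proof (rule ennreal_leI)
      have "H + 2*L \<le> H' + (2+2*L)*H' + (3+2*L)* sqrt (H'/2)" using True HH' by simp
      also have "\<dots> = (3+2*L)*(H' + sqrt (H'/2))" by (simp add: algebra_simps)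
      finally show "H + 2*L \<le> (3+2*L)*(H' + sqrt (H'/2))" .
    qed
    finally show ?thesis unfolding X_def .
  next
    case False
    define \<tau> where "\<tau> = sqrt (2*H')"
    define t where "t = \<tau> / (L + 3/2)"
    have t0: "0 < t" and t1: "t \<le> 1/3"
      and fin: "(H + (exp (t*(L+3/2)) - 1 - t*(L+3/2))) / t \<le> (3+2*L)*(H' + sqrt (H'/2))"
      using caseB_real[OF L0 H'0 HH' False] unfolding t_def \<tau>_def by auto
    define A where "A = exp (t*(L+3/2)) - 1 - t*(L+3/2)"
    define B where "B = t * (exp (t*(L+3/2)) - 1) * exp (-L)"
    have A0: "0 \<le> A" unfolding A_def using exp_ge_add_one_self[of "t*(L+3/2)"] by linarith
    have B0: "0 \<le> B" unfolding B_def using t0 L0 by simp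
    have "(\<integral>\<^sup>+x. ennreal (t * (\<rho> x * \<bar>g x - 1\<bar>)) \<partial>M) + ennreal (B * exp L) \<le>
        (\<integral>\<^sup>+x. ennreal (g x * ln (g x) - g x + 1) \<partial>M) + ennreal A
        + ennreal B * (\<integral>\<^sup>+x. ennreal (exp (\<rho> x)) \<partial>M) + 0 * (\<integral>\<^sup>+x. ennreal (g x) \<partial>M)"
    proof (rule integrate_bound)
      fix x assume "x \<in> space M"
      have p1: "t * \<rho> x * \<bar>g x - 1\<bar> \<le> (g x * ln (g x) - g x + 1) + (exp (t * \<rho> x) - 1 - t * \<rho> x)"
        by (rule pw1[OF r0 g_nonneg]) (use t0 in simp)
      have p2: "exp (t * \<rho> x) - 1 - t * \<rho> x \<le> A + B * (exp (\<rho> x) - exp L)"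
        unfolding A_def B_def by (rule tangent_bound[OF t0 t1 L0 r0])
      have "ennreal (t * (\<rho> x * \<bar>g x - 1\<bar>)) + ennreal (B * exp L) = ennreal (t * (\<rho> x * \<bar>g x - 1\<bar>) + B * exp L)"
        using r0[of x] t0 B0 by (simp add: ennreal_plus[symmetric] del: ennreal_plus)
      also have "\<dots> \<le> ennreal ((g x * ln (g x) - g x + 1) + A + B * exp (\<rho> x))"
        using p1 p2 by (intro ennreal_leI) (simp add: algebra_simps)
      also have "\<dots> = ennreal (g x * ln (g x) - g x + 1) + ennreal A + ennreal B * ennreal (exp (\<rho> x)) + 0 * ennreal (g x)"
        using ent_nonneg[of x] A0 B0
        by (simp add: ennreal_mult[symmetric] ennreal_plus[symmetric] del: ennreal_plus)
      finally show "ennreal (t * (\<rho> x * \<bar>g x - 1\<bar>)) + ennreal (B * exp L) \<le> ennreal (g x * ln (g x) - g x + 1) + ennreal A + ennreal B * ennreal (exp (\<rho> x)) + 0 * ennreal (g x)" .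
    qed (auto simp: ent_nonneg)
    also have "\<dots> \<le> ennreal H + ennreal A + ennreal B * ennreal (exp L) + 0"
      unfolding E by (intro add_mono mult_left_mono Z order_refl) auto
    also have "\<dots> = ennreal (H + A) + ennreal (B * exp L)"
    proof -
      have "0 \<le> H" unfolding H_def by (rule H_nonneg[OF int])
      thus ?thesis using A0 B0 by (simp add: ennreal_mult[symmetric] ennreal_plus[symmetric] del: ennreal_plus)
    qed
    finally have "(\<integral>\<^sup>+x. ennreal (t * (\<rho> x * \<bar>g x - 1\<bar>)) \<partial>M) \<le> ennreal (H + A)"
      by (simp add: ennreal_add_left_cancel_le add.commute[of _ "ennreal (B * exp L)"])
    moreover have "(\<integral>\<^sup>+x. ennreal (t * (\<rho> x * \<bar>g x - 1\<bar>)) \<partial>M) = ennreal t * X"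
    proof -
      have "(\<integral>\<^sup>+x. ennreal (t * (\<rho> x * \<bar>g x - 1\<bar>)) \<partial>M) = (\<integral>\<^sup>+x. ennreal t * ennreal (\<rho> x * \<bar>g x - 1\<bar>) \<partial>M)"
        by (rule nn_integral_cong) (use t0 in \<open>simp add: ennreal_mult'\<close>)
      also have "\<dots> = ennreal t * X" unfolding X_def by (rule nn_integral_cmult) measurable
      finally show ?thesis .
    qed
    ultimately have tX: "ennreal t * X \<le> ennreal (H + A)" by simp
    have "X = ennreal (1/t) * (ennreal t * X)"
      using t0 by (simp add: ennreal_mult[symmetric] mult.assoc[symmetric])
    also have "\<dots> \<le> ennreal (1/t) * ennreal (H + A)" by (intro mult_left_mono tX) simp
    also have "\<dots> = ennreal ((H + A) / t)"
      using t0 by (subst ennreal_mult'[symmetric]) (auto simp: divide_inverse mult.commute)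
    also have "\<dots> \<le> ennreal ((3+2*L)*(H' + sqrt (H'/2)))"
      using fin unfolding A_def by (intro ennreal_leI)
    finally show ?thesis unfolding X_def .
  qed
qed

end


locale coup = dens_setup M N for M N :: "(real^'n) measure" +
  assumes sM[measurable_cong]: "sets M = sets borel"
begin

lemma sN'[measurable_cong]: "sets N = sets borel" using sN sM by simp

lemma g_borel[measurable]: "g \<in> borel_measurable borel"
  using g_meas measurable_cong_sets[OF sM refl] by blast

definition "mm x = min (g x) 1"
definition "aa x = max (1 - g x) 0"
definition "bb x = max (g x - 1) 0"
definition "\<delta> = (\<integral>\<^sup>+ x. ennreal (bb x) \<partial>M)"
definition "Q = (M \<Otimes>\<^sub>M M) \<Otimes>\<^sub>M (count_space UNIV :: bool measure)"
definition "kk z = (if snd z then ennreal (mm (fst (fst z)))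
                     else ennreal (aa (fst (fst z))) * ennreal (bb (snd (fst z))) * inverse \<delta>)"
definition "TT z = (if snd z then (fst (fst z), fst (fst z)) else fst z)"
definition "\<omega> = distr (density Q kk) (borel \<Otimes>\<^sub>M borel) TT"

lemma mm_meas[measurable]: "mm \<in> borel_measurable borel" unfolding mm_def by measurable
lemma aa_meas[measurable]: "aa \<in> borel_measurable borel" unfolding aa_def by measurable
lemma bb_meas[measurable]: "bb \<in> borel_measurable borel" unfolding bb_def by measurable

lemma sQ[measurable_cong]: "sets Q = sets ((borel \<Otimes>\<^sub>M borel) \<Otimes>\<^sub>M (count_space UNIV :: bool measure))"
  unfolding Q_def by (intro sets_pair_measure_cong sM refl)

lemma kk_meas[measurable]: "kk \<in> borel_measurable Q"
  unfolding kk_def by measurable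

lemma TT_meas[measurable]: "TT \<in> measurable Q (borel \<Otimes>\<^sub>M borel)"
  unfolding TT_def by measurable

lemma sfM: "sigma_finite_measure M"
proof -
  interpret prob_space M by (rule M)
  show ?thesis by unfold_locales
qed

lemma sfC: "sigma_finite_measure (count_space (UNIV::bool set))"
  by (rule sigma_finite_measure_count_space_finite) simp

lemma omega_int:
  assumes F[measurable]: "F \<in> borel_measurable (borel \<Otimes>\<^sub>M borel)"
  shows "(\<integral>\<^sup>+ z. F z \<partial>\<omega>) = (\<integral>\<^sup>+ x. ennreal (mm x) * F (x,x) + ennreal (aa x) * inverse \<delta> * (\<integral>\<^sup>+ y. ennreal (bb y) * F (x,y) \<partial>M) \<partial>M)"
proof -
  interpret M: prob_space M by (rule M)
  interpret C: sigma_finite_measure "count_space (UNIV::bool set)" by (rule sfC)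
  have "(\<integral>\<^sup>+ z. F z \<partial>\<omega>) = (\<integral>\<^sup>+ z. F (TT z) \<partial>(density Q kk))"
    unfolding \<omega>_def by (rule nn_integral_distr) (auto simp: measurable_cong_sets[OF sets_density refl])
  also have "\<dots> = (\<integral>\<^sup>+ z. kk z * F (TT z) \<partial>Q)"
    by (rule nn_integral_density) auto
  also have "\<dots> = (\<integral>\<^sup>+ p. \<integral>\<^sup>+ \<beta>. kk (p,\<beta>) * F (TT (p,\<beta>)) \<partial>count_space UNIV \<partial>(M \<Otimes>\<^sub>M M))"
    unfolding Q_def by (rule C.nn_integral_fst[symmetric]) (simp add: Q_def[symmetric])
  also have "\<dots> = (\<integral>\<^sup>+ p. ennreal (mm (fst p)) * F (fst p, fst p) + ennreal (aa (fst p)) * ennreal (bb (snd p)) * inverse \<delta> * F p \<partial>(M \<Otimes>\<^sub>M M))"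
    by (rule nn_integral_cong) (simp add: nn_integral_count_space_finite UNIV_bool kk_def TT_def add.commute)
  also have "\<dots> = (\<integral>\<^sup>+ x. \<integral>\<^sup>+ y. ennreal (mm x) * F (x, x) + ennreal (aa x) * ennreal (bb y) * inverse \<delta> * F (x,y) \<partial>M \<partial>M)"
  proof -
    let ?f = "\<lambda>p. ennreal (mm (fst p)) * F (fst p, fst p) + ennreal (aa (fst p)) * ennreal (bb (snd p)) * inverse \<delta> * F p"
    have "?f \<in> borel_measurable (M \<Otimes>\<^sub>M M)" by measurable
    from sigma_finite_measure.nn_integral_fst[OF sfM this] show ?thesis by simp
  qed
  also have "\<dots> = (\<integral>\<^sup>+ x. ennreal (mm x) * F (x,x) + ennreal (aa x) * inverse \<delta> * (\<integral>\<^sup>+ y. ennreal (bb y) * F (x,y) \<partial>M) \<partial>M)"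
  proof (rule nn_integral_cong)
    fix x assume "x \<in> space M"
    have "(\<integral>\<^sup>+ y. ennreal (mm x) * F (x, x) + ennreal (aa x) * ennreal (bb y) * inverse \<delta> * F (x,y) \<partial>M)
        = (\<integral>\<^sup>+ y. ennreal (mm x) * F (x, x) \<partial>M) + (\<integral>\<^sup>+ y. (ennreal (aa x) * inverse \<delta>) * (ennreal (bb y) * F (x,y)) \<partial>M)"
      by (subst nn_integral_add) (auto simp: ac_simps)
    also have "\<dots> = ennreal (mm x) * F (x, x) + ennreal (aa x) * inverse \<delta> * (\<integral>\<^sup>+ y. ennreal (bb y) * F (x,y) \<partial>M)"
      by (subst nn_integral_cmult) (auto simp: M.emeasure_space_1)
    finally show "(\<integral>\<^sup>+ y. ennreal (mm x) * F (x, x) + ennreal (aa x) * ennreal (bb y) * inverse \<delta> * F (x,y) \<partial>M)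
        = ennreal (mm x) * F (x,x) + ennreal (aa x) * inverse \<delta> * (\<integral>\<^sup>+ y. ennreal (bb y) * F (x,y) \<partial>M)" .
  qed
  finally show ?thesis .
qed

lemma mm_bb: "ennreal (mm x) + ennreal (bb x) = ennreal (g x)"
proof -
  have "mm x + bb x = g x" unfolding mm_def bb_def by auto
  thus ?thesis using g_nonneg[of x] unfolding mm_def bb_def by (subst ennreal_plus[symmetric]) auto
qed

lemma mm_aa: "ennreal (mm x) + ennreal (aa x) = 1"
proof -
  have "mm x + aa x = 1" unfolding mm_def aa_def by auto
  thus ?thesis using g_nonneg[of x] unfolding mm_def aa_def by (subst ennreal_plus[symmetric]) auto
qed

lemma aa_bb: "ennreal (aa x) + ennreal (bb x) = ennreal \<bar>g x - 1\<bar>"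
proof -
  have "aa x + bb x = \<bar>g x - 1\<bar>" unfolding aa_def bb_def by auto
  thus ?thesis unfolding aa_def bb_def by (subst ennreal_plus[symmetric]) auto
qed

lemma int_mm_bb: "(\<integral>\<^sup>+x. ennreal (mm x) \<partial>M) + (\<integral>\<^sup>+x. ennreal (bb x) \<partial>M) = 1"
proof -
  have "(\<integral>\<^sup>+x. ennreal (mm x) \<partial>M) + (\<integral>\<^sup>+x. ennreal (bb x) \<partial>M) = (\<integral>\<^sup>+x. ennreal (mm x) + ennreal (bb x) \<partial>M)"
    by (rule nn_integral_add[symmetric]) auto
  also have "\<dots> = (\<integral>\<^sup>+x. ennreal (g x) \<partial>M)" by (simp add: mm_bb)
  finally show ?thesis using nn_g by simp
qed

lemma int_mm_aa: "(\<integral>\<^sup>+x. ennreal (mm x) \<partial>M) + (\<integral>\<^sup>+x. ennreal (aa x) \<partial>M) = 1"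
proof -
  interpret M: prob_space M by (rule M)
  have "(\<integral>\<^sup>+x. ennreal (mm x) \<partial>M) + (\<integral>\<^sup>+x. ennreal (aa x) \<partial>M) = (\<integral>\<^sup>+x. ennreal (mm x) + ennreal (aa x) \<partial>M)"
    by (rule nn_integral_add[symmetric]) auto
  also have "\<dots> = (\<integral>\<^sup>+x. 1 \<partial>M)" by (simp add: mm_aa)
  finally show ?thesis by (simp add: M.emeasure_space_1)
qed

lemma int_mm_fin: "(\<integral>\<^sup>+x. ennreal (mm x) \<partial>M) \<noteq> \<infinity>"
proof
  assume "(\<integral>\<^sup>+x. ennreal (mm x) \<partial>M) = \<infinity>"
  hence "(\<integral>\<^sup>+x. ennreal (mm x) \<partial>M) + (\<integral>\<^sup>+x. ennreal (bb x) \<partial>M) = \<infinity>" by simp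
  thus False using int_mm_bb by simp
qed

lemma aa_delta: "(\<integral>\<^sup>+x. ennreal (aa x) \<partial>M) = \<delta>"
proof -
  have "(\<integral>\<^sup>+x. ennreal (mm x) \<partial>M) + (\<integral>\<^sup>+x. ennreal (aa x) \<partial>M) = (\<integral>\<^sup>+x. ennreal (mm x) \<partial>M) + \<delta>"
    using int_mm_bb int_mm_aa unfolding \<delta>_def by simp
  thus ?thesis using int_mm_fin ennreal_add_left_cancel by blast
qed

lemma delta_fin: "\<delta> < top"
proof -
  have "\<delta> \<le> (\<integral>\<^sup>+x. ennreal (mm x) \<partial>M) + \<delta>" by (rule add_increasing[OF zero_le order_refl])
  also have "\<dots> = 1" using int_mm_bb unfolding \<delta>_def by simp
  finally show ?thesis by (simp add: order_le_less_trans)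
qed

lemma cst: assumes "\<delta> = 0 \<Longrightarrow> X = 0" shows "inverse \<delta> * \<delta> * X = X"
proof (cases "\<delta> = 0")
  case True thus ?thesis using assms by simp
next
  case False
  have "inverse \<delta> * \<delta> = \<delta> / \<delta>" by (simp add: divide_ennreal_def mult.commute)
  also have "\<dots> = 1" using False delta_fin by simp
  finally show ?thesis by simp
qed

lemma cst_le: "inverse \<delta> * \<delta> * X \<le> X"
proof (cases "\<delta> = 0")
  case True thus ?thesis by simp
next
  case False
  have "inverse \<delta> * \<delta> = \<delta> / \<delta>" by (simp add: divide_ennreal_def mult.commute)
  also have "\<dots> = 1" using False delta_fin by simp
  finally show ?thesis by simp
qed

lemma sets_omega: "sets \<omega> = sets (borel \<Otimes>\<^sub>M borel)"
  unfolding \<omega>_def by simp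

lemma emeasure_marg:
  assumes A: "A \<in> sets borel" and f[measurable]: "f \<in> measurable (borel \<Otimes>\<^sub>M borel) borel"
  shows "emeasure (distr \<omega> borel f) A = (\<integral>\<^sup>+ z. indicator A (f z) \<partial>\<omega>)"
proof -
  have fm: "f \<in> measurable \<omega> borel" using f measurable_cong_sets[OF sets_omega refl] by blast
  have "emeasure (distr \<omega> borel f) A = (\<integral>\<^sup>+ x. indicator A x \<partial>(distr \<omega> borel f))"
    using A by simp
  also have "\<dots> = (\<integral>\<^sup>+ z. indicator A (f z) \<partial>\<omega>)"
    by (rule nn_integral_distr[OF fm]) (use A in simp)
  finally show ?thesis .
qed

lemma marg_fst: "distr \<omega> borel fst = M"
proof (rule measure_eqI)
  show "sets (distr \<omega> borel fst) = sets M" using sM by simp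
  fix A assume "A \<in> sets (distr \<omega> borel fst)"
  hence A[measurable]: "A \<in> sets borel" by simp
  interpret M: prob_space M by (rule M)
  have "emeasure (distr \<omega> borel fst) A = (\<integral>\<^sup>+ z. indicator A (fst z) \<partial>\<omega>)"
    by (rule emeasure_marg) auto
  also have "\<dots> = (\<integral>\<^sup>+ x. ennreal (mm x) * indicator A x + ennreal (aa x) * inverse \<delta> * (\<integral>\<^sup>+ y. ennreal (bb y) * indicator A x \<partial>M) \<partial>M)"
  proof -
    have F: "(\<lambda>z. indicator A (fst z) :: ennreal) \<in> borel_measurable (borel \<Otimes>\<^sub>M borel)" by measurable
    show ?thesis by (simp only: omega_int[OF F] fst_conv)
  qed
  also have "\<dots> = (\<integral>\<^sup>+ x. ennreal (mm x) * indicator A x + (inverse \<delta> * \<delta>) * (ennreal (aa x) * indicator A x) \<partial>M)"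
  proof (rule nn_integral_cong)
    fix x assume "x \<in> space M"
    have "(\<integral>\<^sup>+ y. ennreal (bb y) * indicator A x \<partial>M) = \<delta> * indicator A x"
      unfolding \<delta>_def by (rule nn_integral_multc) measurable
    thus "ennreal (mm x) * indicator A x + ennreal (aa x) * inverse \<delta> * (\<integral>\<^sup>+ y. ennreal (bb y) * indicator A x \<partial>M)
        = ennreal (mm x) * indicator A x + (inverse \<delta> * \<delta>) * (ennreal (aa x) * indicator A x)"
      by (simp add: ac_simps)
  qed
  also have "\<dots> = (\<integral>\<^sup>+ x. ennreal (mm x) * indicator A x \<partial>M) + (inverse \<delta> * \<delta>) * (\<integral>\<^sup>+ x. ennreal (aa x) * indicator A x \<partial>M)"
    by (subst nn_integral_add) (auto simp: nn_integral_cmult)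
  also have "\<dots> = (\<integral>\<^sup>+ x. ennreal (mm x) * indicator A x \<partial>M) + (\<integral>\<^sup>+ x. ennreal (aa x) * indicator A x \<partial>M)"
  proof -
    have "(\<integral>\<^sup>+ x. ennreal (aa x) * indicator A x \<partial>M) \<le> (\<integral>\<^sup>+ x. ennreal (aa x) \<partial>M)"
      by (rule nn_integral_mono) (simp add: indicator_def)
    hence "\<delta> = 0 \<Longrightarrow> (\<integral>\<^sup>+ x. ennreal (aa x) * indicator A x \<partial>M) = 0" using aa_delta by simp
    thus ?thesis using cst by simp
  qed
  also have "\<dots> = (\<integral>\<^sup>+ x. (ennreal (mm x) + ennreal (aa x)) * indicator A x \<partial>M)"
    by (subst nn_integral_add[symmetric]) (auto simp: distrib_right)
  also have "\<dots> = (\<integral>\<^sup>+ x. indicator A x \<partial>M)" by (simp add: mm_aa)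
  also have "\<dots> = emeasure M A" using sM by simp
  finally show "emeasure (distr \<omega> borel fst) A = emeasure M A" .
qed

lemma marg_snd: "distr \<omega> borel snd = N"
proof (rule measure_eqI)
  show "sets (distr \<omega> borel snd) = sets N" using sN' by simp
  fix A assume "A \<in> sets (distr \<omega> borel snd)"
  hence A[measurable]: "A \<in> sets borel" by simp
  interpret M: prob_space M by (rule M)
  have "emeasure (distr \<omega> borel snd) A = (\<integral>\<^sup>+ z. indicator A (snd z) \<partial>\<omega>)"
    by (rule emeasure_marg) auto
  also have "\<dots> = (\<integral>\<^sup>+ x. ennreal (mm x) * indicator A x + ennreal (aa x) * inverse \<delta> * (\<integral>\<^sup>+ y. ennreal (bb y) * indicator A y \<partial>M) \<partial>M)"
  proof -
    have F: "(\<lambda>z. indicator A (snd z) :: ennreal) \<in> borel_measurable (borel \<Otimes>\<^sub>M borel)" by measurable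
    show ?thesis by (simp only: omega_int[OF F] fst_conv snd_conv)
  qed
  also have "\<dots> = (\<integral>\<^sup>+ x. ennreal (mm x) * indicator A x \<partial>M) + (inverse \<delta> * (\<integral>\<^sup>+ y. ennreal (bb y) * indicator A y \<partial>M)) * (\<integral>\<^sup>+ x. ennreal (aa x) \<partial>M)"
  proof -
    define C where "C = (\<integral>\<^sup>+ y. ennreal (bb y) * indicator A y \<partial>M)"
    have "(\<integral>\<^sup>+ x. ennreal (mm x) * indicator A x + ennreal (aa x) * inverse \<delta> * C \<partial>M)
        = (\<integral>\<^sup>+ x. ennreal (mm x) * indicator A x \<partial>M) + (\<integral>\<^sup>+ x. (inverse \<delta> * C) * ennreal (aa x) \<partial>M)"
      by (subst nn_integral_add[symmetric]) (auto intro!: nn_integral_cong simp: ac_simps)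
    also have "(\<integral>\<^sup>+ x. (inverse \<delta> * C) * ennreal (aa x) \<partial>M) = (inverse \<delta> * C) * (\<integral>\<^sup>+ x. ennreal (aa x) \<partial>M)"
      by (rule nn_integral_cmult) measurable
    finally show ?thesis unfolding C_def .
  qed
  also have "\<dots> = (\<integral>\<^sup>+ x. ennreal (mm x) * indicator A x \<partial>M) + (inverse \<delta> * \<delta>) * (\<integral>\<^sup>+ y. ennreal (bb y) * indicator A y \<partial>M)"
    by (simp add: aa_delta ac_simps)
  also have "\<dots> = (\<integral>\<^sup>+ x. ennreal (mm x) * indicator A x \<partial>M) + (\<integral>\<^sup>+ x. ennreal (bb x) * indicator A x \<partial>M)"
  proof -
    have "(\<integral>\<^sup>+ x. ennreal (bb x) * indicator A x \<partial>M) \<le> (\<integral>\<^sup>+ x. ennreal (bb x) \<partial>M)"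
      by (rule nn_integral_mono) (simp add: indicator_def)
    hence "\<delta> = 0 \<Longrightarrow> (\<integral>\<^sup>+ x. ennreal (bb x) * indicator A x \<partial>M) = 0" unfolding \<delta>_def by simp
    thus ?thesis using cst by simp
  qed
  also have "\<dots> = (\<integral>\<^sup>+ x. (ennreal (mm x) + ennreal (bb x)) * indicator A x \<partial>M)"
    by (subst nn_integral_add[symmetric]) (auto simp: distrib_right)
  also have "\<dots> = (\<integral>\<^sup>+ x. ennreal (g x) * indicator A x \<partial>M)" by (simp add: mm_bb)
  also have "\<dots> = emeasure N A" using sM A by (simp add: emeasure_N)
  finally show "emeasure (distr \<omega> borel snd) A = emeasure N A" .
qed

lemma omega_prob: "prob_space \<omega>"
proof
  interpret M: prob_space M by (rule M)
  have "emeasure \<omega> (space \<omega>) = emeasure (distr \<omega> borel fst) (space borel)"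
  proof -
    have fm: "fst \<in> measurable \<omega> borel" using measurable_cong_sets[OF sets_omega refl] by auto
    have "emeasure (distr \<omega> borel fst) (space borel) = emeasure \<omega> (fst -` space borel \<inter> space \<omega>)"
      by (rule emeasure_distr[OF fm]) simp
    thus ?thesis by simp
  qed
  also have "\<dots> = emeasure M (space M)" unfolding marg_fst using sets_eq_imp_space_eq[OF sM] by simp
  finally show "emeasure \<omega> (space \<omega>) = 1" by (simp add: M.emeasure_space_1)
qed

lemma omega_coupling: "\<omega> \<in> couplings M N"
  unfolding couplings_def using sets_omega omega_prob marg_fst marg_snd by simp

lemma cost_bound:
  fixes c :: "real^'n \<Rightarrow> real^'n \<Rightarrow> real" and \<rho> :: "real^'n \<Rightarrow> real" and K :: real
  assumes cm[measurable]: "(\<lambda>z. c (fst z) (snd z)) \<in> borel_measurable (borel \<Otimes>\<^sub>M borel)"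
    and cxx: "\<And>x. c x x = 0" and cb: "\<And>x y. c x y \<le> K * (\<rho> x + \<rho> y)" and K0: "0 \<le> K"
    and rm[measurable]: "\<rho> \<in> borel_measurable borel" and r0: "\<And>x. 0 \<le> \<rho> x"
  shows "(\<integral>\<^sup>+ z. ennreal (c (fst z) (snd z)) \<partial>\<omega>) \<le> ennreal K * (\<integral>\<^sup>+ x. ennreal (\<rho> x * \<bar>g x - 1\<bar>) \<partial>M)"
proof -
  define Bq where "Bq = (\<integral>\<^sup>+ y. ennreal (bb y) * ennreal (\<rho> y) \<partial>M)"
  define Aq where "Aq = (\<integral>\<^sup>+ y. ennreal (aa y) * ennreal (\<rho> y) \<partial>M)"
  have F: "(\<lambda>z. ennreal (c (fst z) (snd z))) \<in> borel_measurable (borel \<Otimes>\<^sub>M borel)" by measurable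
  have "(\<integral>\<^sup>+ z. ennreal (c (fst z) (snd z)) \<partial>\<omega>) = (\<integral>\<^sup>+ x. ennreal (mm x) * ennreal (c x x) + ennreal (aa x) * inverse \<delta> * (\<integral>\<^sup>+ y. ennreal (bb y) * ennreal (c x y) \<partial>M) \<partial>M)"
    by (simp only: omega_int[OF F] fst_conv snd_conv)
  also have "\<dots> \<le> (\<integral>\<^sup>+ x. (inverse \<delta> * \<delta> * ennreal K) * (ennreal (aa x) * ennreal (\<rho> x)) + (inverse \<delta> * ennreal K * Bq) * ennreal (aa x) \<partial>M)"
  proof (rule nn_integral_mono)
    fix x assume "x \<in> space M"
    have "(\<integral>\<^sup>+ y. ennreal (bb y) * ennreal (c x y) \<partial>M) \<le> (\<integral>\<^sup>+ y. (ennreal K * ennreal (\<rho> x)) * ennreal (bb y) + ennreal K * (ennreal (bb y) * ennreal (\<rho> y)) \<partial>M)"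
    proof (rule nn_integral_mono)
      fix y assume "y \<in> space M"
      have "ennreal (c x y) \<le> ennreal (K * (\<rho> x + \<rho> y))" using cb by (rule ennreal_leI)
      also have "\<dots> = ennreal K * ennreal (\<rho> x) + ennreal K * ennreal (\<rho> y)"
        using K0 r0[of x] r0[of y] by (simp add: ennreal_mult distrib_left)
      finally have "ennreal (bb y) * ennreal (c x y) \<le> ennreal (bb y) * (ennreal K * ennreal (\<rho> x) + ennreal K * ennreal (\<rho> y))"
        by (rule mult_left_mono) simp
      thus "ennreal (bb y) * ennreal (c x y) \<le> (ennreal K * ennreal (\<rho> x)) * ennreal (bb y) + ennreal K * (ennreal (bb y) * ennreal (\<rho> y))"
        by (simp add: algebra_simps)
    qed
    also have "\<dots> = (ennreal K * ennreal (\<rho> x)) * \<delta> + ennreal K * Bq"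
      unfolding \<delta>_def Bq_def by (subst nn_integral_add) (auto simp: nn_integral_cmult)
    finally have inner: "(\<integral>\<^sup>+ y. ennreal (bb y) * ennreal (c x y) \<partial>M) \<le> (ennreal K * ennreal (\<rho> x)) * \<delta> + ennreal K * Bq" .
    have "ennreal (mm x) * ennreal (c x x) + ennreal (aa x) * inverse \<delta> * (\<integral>\<^sup>+ y. ennreal (bb y) * ennreal (c x y) \<partial>M)
        \<le> 0 + ennreal (aa x) * inverse \<delta> * ((ennreal K * ennreal (\<rho> x)) * \<delta> + ennreal K * Bq)"
      using inner by (intro add_mono mult_left_mono) (auto simp: cxx)
    also have "\<dots> = (inverse \<delta> * \<delta> * ennreal K) * (ennreal (aa x) * ennreal (\<rho> x)) + (inverse \<delta> * ennreal K * Bq) * ennreal (aa x)"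
      by (simp add: algebra_simps)
    finally show "ennreal (mm x) * ennreal (c x x) + ennreal (aa x) * inverse \<delta> * (\<integral>\<^sup>+ y. ennreal (bb y) * ennreal (c x y) \<partial>M)
        \<le> (inverse \<delta> * \<delta> * ennreal K) * (ennreal (aa x) * ennreal (\<rho> x)) + (inverse \<delta> * ennreal K * Bq) * ennreal (aa x)" .
  qed
  also have "\<dots> = (inverse \<delta> * \<delta> * ennreal K) * Aq + (inverse \<delta> * ennreal K * Bq) * \<delta>"
    unfolding Aq_def aa_delta[symmetric] by (subst nn_integral_add) (auto simp: nn_integral_cmult)
  also have "\<dots> = inverse \<delta> * \<delta> * (ennreal K * (Aq + Bq))"
    by (simp add: algebra_simps)
  also have "\<dots> \<le> ennreal K * (Aq + Bq)" by (rule cst_le)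
  also have "Aq + Bq = (\<integral>\<^sup>+ x. ennreal (\<rho> x * \<bar>g x - 1\<bar>) \<partial>M)"
  proof -
    have "Aq + Bq = (\<integral>\<^sup>+ x. ennreal (aa x) * ennreal (\<rho> x) + ennreal (bb x) * ennreal (\<rho> x) \<partial>M)"
      unfolding Aq_def Bq_def by (subst nn_integral_add) auto
    also have "\<dots> = (\<integral>\<^sup>+ x. ennreal (\<rho> x * \<bar>g x - 1\<bar>) \<partial>M)"
    proof (rule nn_integral_cong)
      fix x
      have "ennreal (aa x) * ennreal (\<rho> x) + ennreal (bb x) * ennreal (\<rho> x) = (ennreal (aa x) + ennreal (bb x)) * ennreal (\<rho> x)"
        by (simp add: distrib_right)
      also have "\<dots> = ennreal \<bar>g x - 1\<bar> * ennreal (\<rho> x)" by (simp add: aa_bb)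
      also have "\<dots> = ennreal (\<rho> x * \<bar>g x - 1\<bar>)" using r0[of x] by (simp add: ennreal_mult mult.commute)
      finally show "ennreal (aa x) * ennreal (\<rho> x) + ennreal (bb x) * ennreal (\<rho> x) = ennreal (\<rho> x * \<bar>g x - 1\<bar>)" .
    qed
    finally show ?thesis .
  qed
  finally show ?thesis .
qed

end


lemma mnorm_cont: "continuous_on UNIV (\<lambda>v. mnorm S (v::real^'n))"
proof -
  have c1: "continuous_on UNIV ((*v) (matrix_inv S))" by (rule matrix_vector_mult_linear_continuous_on)
  have "continuous_on UNIV (\<lambda>v. v \<bullet> (matrix_inv S *v v))"
    by (intro continuous_on_inner continuous_on_id c1)
  hence "continuous_on UNIV (\<lambda>v. sqrt (v \<bullet> (matrix_inv S *v v)))"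
    by (rule continuous_on_real_sqrt)
  thus ?thesis unfolding mnorm_def .
qed
lemma mnorm_meas[measurable]: "(\<lambda>v. mnorm S (v::real^'n)) \<in> borel_measurable borel"
  by (rule borel_measurable_continuous_onI[OF mnorm_cont])

lemma powr_convex2:
  fixes a b p :: real
  assumes a: "0 \<le> a" and b: "0 \<le> b" and p: "1 \<le> p"
  shows "(a + b) powr p \<le> 2 powr (p - 1) * (a powr p + b powr p)"
proof -
  have two: "1 \<le> 2 powr (p - 1)" using p by (intro ge_one_powr_ge_zero) auto
  show ?thesis
  proof (cases "a = 0 \<or> b = 0")
    case True
    thus ?thesis
    proof
      assume "a = 0"
      have "1 * b powr p \<le> 2 powr (p - 1) * b powr p" by (rule mult_right_mono[OF two]) simp
      thus ?thesis using \<open>a = 0\<close> p by simp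
    next
      assume "b = 0"
      have "1 * a powr p \<le> 2 powr (p - 1) * a powr p" by (rule mult_right_mono[OF two]) simp
      thus ?thesis using \<open>b = 0\<close> p by simp
    qed
  next
    case False
    hence ap: "0 < a" and bp: "0 < b" using a b by auto
    have "((1 - 1/2) *\<^sub>R a + (1/2) *\<^sub>R b) powr p \<le> (1 - 1/2) * a powr p + (1/2) * b powr p"
      by (rule convex_onD[OF powr_convex[OF p]]) (use ap bp in auto)
    hence h: "((a + b) / 2) powr p \<le> (a powr p + b powr p) / 2" by (simp add: field_simps)
    have e: "a + b = 2 * ((a + b) / 2)" by simp
    have "(a + b) powr p = (2 * ((a + b) / 2)) powr p" using arg_cong[OF e, of "\<lambda>x. x powr p"] .
    also have "\<dots> = 2 powr p * ((a + b) / 2) powr p" by (rule powr_mult)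
    also have "\<dots> \<le> 2 powr p * ((a powr p + b powr p) / 2)" by (rule mult_left_mono[OF h]) simp
    also have "\<dots> = 2 powr (p - 1) * (a powr p + b powr p)"
      by (simp add: powr_diff field_simps)
    finally show ?thesis .
  qed
qed

lemma powr_superadd:
  fixes a b p :: real
  assumes a: "0 \<le> a" and b: "0 \<le> b" and p: "1 \<le> p"
  shows "a powr p + b powr p \<le> (a + b) powr p"
proof (cases "a + b = 0")
  case True
  hence "a = 0" "b = 0" using a b by auto
  thus ?thesis by simp
next
  case False
  hence s: "0 < a + b" using a b by simp
  have h: "x powr p \<le> x" if "0 \<le> x" "x \<le> 1" for x :: real
  proof -
    have "x powr p \<le> x powr 1" by (rule powr_mono'[OF p that])
    thus ?thesis using that by (simp add: powr_one)
  qed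
  have "a powr p = (a + b) powr p * (a / (a + b)) powr p"
    using s by (simp add: powr_divide)
  also have "\<dots> \<le> (a + b) powr p * (a / (a + b))"
    by (rule mult_left_mono[OF h]) (use a b s in auto)
  finally have 1: "a powr p \<le> (a + b) powr p * (a / (a + b))" .
  have "b powr p = (a + b) powr p * (b / (a + b)) powr p"
    using s by (simp add: powr_divide)
  also have "\<dots> \<le> (a + b) powr p * (b / (a + b))"
    by (rule mult_left_mono[OF h]) (use a b s in auto)
  finally have 2: "b powr p \<le> (a + b) powr p * (b / (a + b))" .
  have "(a + b) powr p * (a / (a + b)) + (a + b) powr p * (b / (a + b)) = (a + b) powr p * ((a + b) / (a + b))"
    by (simp only: add_divide_distrib distrib_left)
  also have "\<dots> = (a + b) powr p" using s by simp
  finally have "(a + b) powr p * (a / (a + b)) + (a + b) powr p * (b / (a + b)) = (a + b) powr p" .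
  thus ?thesis using 1 2 by linarith
qed

theorem mainTheorem1:
  fixes p :: real and \<Sigma> :: "real^'n^'n" and \<eta> \<zeta> :: "(real^'n) measure"
  assumes "p \<ge> 1"
    and "pos_def_mat \<Sigma>"
    and "prob_space \<eta>" and "sets \<eta> = sets borel"
    and "exp_controlled p \<Sigma> \<eta>"
    and "prob_space \<zeta>" and "sets \<zeta> = sets borel"
    and "absolutely_continuous \<eta> \<zeta>"
  shows "KL \<zeta> \<eta> = \<infinity> \<or>
    wasserstein p \<Sigma> \<eta> \<zeta> \<le>
      ennreal ((3 + real CARD('n)) *
        (real_of_ereal (KL \<zeta> \<eta>) powr (1 / p) + (real_of_ereal (KL \<zeta> \<eta>) / 2) powr (1 / (2 * p))))"
proof -
  note p1 = assms(1) and pd = assms(2)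
  define d where "d = real CARD('n)"
  have d0: "0 \<le> d" unfolding d_def by simp
  have ds: "dens_setup \<eta> \<zeta>" unfolding dens_setup_def using assms(3,4,6,7,8) by simp
  have cp: "coup \<eta> \<zeta>" unfolding coup_def coup_axioms_def using ds assms(4) by simp
  interpret C: coup \<eta> \<zeta> by (rule cp)
  have gdef: "(\<lambda>x. ln (enn2real (RN_deriv \<eta> \<zeta> x))) = (\<lambda>x. ln (C.g x))" by (simp add: C.g_def)
  show ?thesis
  proof (cases "integrable \<zeta> (\<lambda>x. ln (C.g x))")
    case False
    thus ?thesis unfolding KL_def gdef by simp
  next
    case True
    define H where "H = (\<integral>x. ln (C.g x) \<partial>\<zeta>)"
    have KLH: "KL \<zeta> \<eta> = ereal H" unfolding KL_def gdef H_def using True by simp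
    have H0: "0 \<le> H" unfolding H_def by (rule C.H_nonneg[OF True])
    define S where "S = H + sqrt (H/2)"
    have S0: "0 \<le> S" unfolding S_def using H0 by simp
    define K where "K = (2::real) powr (p - 1)"
    have K1: "1 \<le> K" unfolding K_def using p1 by (intro ge_one_powr_ge_zero) auto
    define c0 where "c0 = (INF \<omega>\<in>couplings \<eta> \<zeta>. \<integral>\<^sup>+ z. ennreal (mnorm \<Sigma> (fst z - snd z) powr p) \<partial>\<omega>)"
    have bound_eps: "c0 \<le> ennreal (K * (3 + d + 2*u^2) * (H + u^2 + sqrt ((H + u^2)/2)))" if u0: "0 < u" for u
    proof -
      define L where "L = d/2 + u^2"
      have L0: "0 < L" unfolding L_def using d0 u0 by (simp add: add_nonneg_pos)
      have "(INF \<theta>'. \<integral>\<^sup>+ \<theta>. ennreal (exp (mnorm \<Sigma> (\<theta> - \<theta>') powr p)) \<partial>\<eta>) \<le> ennreal (exp (d / 2))"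
        using assms(5) unfolding exp_controlled_def d_def .
      also have "\<dots> < ennreal (exp L)" unfolding L_def using u0 by (simp add: ennreal_lessI)
      finally obtain \<theta>0 where Z: "(\<integral>\<^sup>+ \<theta>. ennreal (exp (mnorm \<Sigma> (\<theta> - \<theta>0) powr p)) \<partial>\<eta>) < ennreal (exp L)"
        by (auto simp: INF_less_iff)
      define \<rho> where "\<rho> = (\<lambda>x. mnorm \<Sigma> (x - \<theta>0) powr p)"
      have rb[measurable]: "\<rho> \<in> borel_measurable borel" unfolding \<rho>_def by measurable
      have rm: "\<rho> \<in> borel_measurable \<eta>" using rb measurable_cong_sets[OF assms(4) refl] by blast
      have r0: "\<And>x. 0 \<le> \<rho> x" unfolding \<rho>_def by simp
      have k: "(\<integral>\<^sup>+ x. ennreal (\<rho> x * \<bar>C.g x - 1\<bar>) \<partial>\<eta>) \<le> ennreal ((3+2*L)*((H + u^2) + sqrt ((H + u^2)/2)))"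
      proof (rule C.key[OF rm r0 _ L0 True])
        show "(\<integral>\<^sup>+ x. ennreal (exp (\<rho> x)) \<partial>\<eta>) \<le> ennreal (exp L)" using Z unfolding \<rho>_def by simp
        show "(\<integral>x. ln (C.g x) \<partial>\<zeta>) \<le> H + u^2" unfolding H_def by simp
        have "0 < u^2" using u0 by simp
        thus "0 < H + u^2" using H0 by linarith
      qed
      have cm: "(\<lambda>z. mnorm \<Sigma> (fst z - snd z) powr p) \<in> borel_measurable (borel \<Otimes>\<^sub>M borel)" by measurable
      have cb: "mnorm \<Sigma> (x - y) powr p \<le> K * (\<rho> x + \<rho> y)" for x y
      proof -
        have "mnorm \<Sigma> (x - y) powr p \<le> (mnorm \<Sigma> (x - \<theta>0) + mnorm \<Sigma> (y - \<theta>0)) powr p"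
          by (rule powr_mono2) (use p1 mnorm_dist_tri[OF pd] mnorm_nonneg[OF pd] in auto)
        also have "\<dots> \<le> K * (\<rho> x + \<rho> y)" unfolding K_def \<rho>_def
          by (rule powr_convex2) (use p1 mnorm_nonneg[OF pd] in auto)
        finally show ?thesis .
      qed
      have cxx: "mnorm \<Sigma> (x - x) powr p = 0" for x by (simp add: mnorm_zero)
      have cost: "(\<integral>\<^sup>+ z. ennreal (mnorm \<Sigma> (fst z - snd z) powr p) \<partial>C.\<omega>) \<le> ennreal K * (\<integral>\<^sup>+ x. ennreal (\<rho> x * \<bar>C.g x - 1\<bar>) \<partial>\<eta>)"
        using C.cost_bound[of "\<lambda>x y. mnorm \<Sigma> (x - y) powr p" K \<rho>] cm cxx cb K1 rb r0 by simp
      have "c0 \<le> (\<integral>\<^sup>+ z. ennreal (mnorm \<Sigma> (fst z - snd z) powr p) \<partial>C.\<omega>)"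
        unfolding c0_def by (rule INF_lower[OF C.omega_coupling])
      also have "\<dots> \<le> ennreal K * (\<integral>\<^sup>+ x. ennreal (\<rho> x * \<bar>C.g x - 1\<bar>) \<partial>\<eta>)" by (rule cost)
      also have "\<dots> \<le> ennreal K * ennreal ((3+2*L)*((H + u^2) + sqrt ((H + u^2)/2)))"
        by (rule mult_left_mono[OF k]) simp
      also have "\<dots> = ennreal (K * ((3+2*L)*((H + u^2) + sqrt ((H + u^2)/2))))"
        by (rule ennreal_mult'[symmetric]) (use K1 in simp)
      also have "\<dots> = ennreal (K * (3 + d + 2*u^2) * (H + u^2 + sqrt ((H + u^2)/2)))"
        by (rule arg_cong[where f=ennreal]) (simp add: L_def algebra_simps)
      finally show ?thesis .
    qed
    have c0b: "c0 \<le> ennreal (K * (3 + d) * S)"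
    proof (rule ennreal_le_epsilon)
      fix e :: real assume e0: "0 < e"
      define Cc where "Cc = K * (2*(3+d) + 2*S + 4)"
      have Cc0: "0 < Cc" unfolding Cc_def using K1 d0 S0 by simp
      define u where "u = min 1 (e / Cc)"
      have u0: "0 < u" unfolding u_def using e0 Cc0 by simp
      have u1: "u \<le> 1" unfolding u_def by simp
      have uC: "u * Cc \<le> e" unfolding u_def using Cc0 e0 by (simp add: min_def field_simps)
      have uu: "u^2 \<le> u" using u0 u1 by (simp add: power2_eq_square mult_le_cancel_left1)
      have sq: "sqrt ((H + u^2)/2) \<le> sqrt (H/2) + u"
      proof -
        have "sqrt ((H + u^2)/2) = sqrt (H/2 + u^2/2)" by (simp add: add_divide_distrib)
        also have "\<dots> \<le> sqrt (H/2) + sqrt (u^2/2)" by (rule sqrt_add_le_add_sqrt) (use H0 in auto)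
        also have "sqrt (u^2/2) \<le> sqrt (u^2)" by (rule real_sqrt_le_mono) simp
        also have "sqrt (u^2) = u" using u0 by simp
        finally show ?thesis by simp
      qed
      have T: "H + u^2 + sqrt ((H + u^2)/2) \<le> S + 2*u" unfolding S_def using sq uu by simp
      have T0: "0 \<le> H + u^2 + sqrt ((H + u^2)/2)" using H0 by simp
      have "(3 + d + 2*u^2) * (H + u^2 + sqrt ((H + u^2)/2)) \<le> ((3 + d) + 2*u) * (S + 2*u)"
        by (rule mult_mono) (use uu T T0 d0 u0 in auto)
      also have "\<dots> = (3+d)*S + u * (2*(3+d) + 2*S) + 4*u^2" by (simp add: algebra_simps power2_eq_square)
      also have "\<dots> \<le> (3+d)*S + u * (2*(3+d) + 2*S + 4)" using uu by (simp add: algebra_simps)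
      finally have "K * ((3 + d + 2*u^2) * (H + u^2 + sqrt ((H + u^2)/2))) \<le> K * ((3+d)*S + u * (2*(3+d) + 2*S + 4))"
        using K1 by (intro mult_left_mono) auto
      also have "\<dots> = K * (3+d) * S + u * Cc" unfolding Cc_def by (simp add: algebra_simps)
      also have "\<dots> \<le> K * (3+d) * S + e" using uC by simp
      finally have r: "K * (3 + d + 2*u^2) * (H + u^2 + sqrt ((H + u^2)/2)) \<le> K * (3+d) * S + e"
        by (simp add: mult.assoc)
      have "c0 \<le> ennreal (K * (3 + d + 2*u^2) * (H + u^2 + sqrt ((H + u^2)/2)))" by (rule bound_eps[OF u0])
      also have "\<dots> \<le> ennreal (K * (3+d) * S + e)" using r by (rule ennreal_leI)
      also have "\<dots> = ennreal (K * (3+d) * S) + ennreal e" using K1 d0 S0 e0 by (simp add: ennreal_plus)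
      finally show "c0 \<le> ennreal (K * (3 + d) * S) + ennreal e" .
    qed
    define R where "R = (3 + d) * (H powr (1/p) + (H/2) powr (1/(2*p)))"
    have R0: "0 \<le> R" unfolding R_def using d0 by simp
    have VR: "K * (3 + d) * S \<le> R powr p"
    proof -
      have a: "(H powr (1/p)) powr p = H" using p1 H0 by (simp add: powr_powr powr_one)
      have b: "((H/2) powr (1/(2*p))) powr p = sqrt (H/2)" using p1 H0
        by (simp add: powr_powr powr_half_sqrt[symmetric])
      have "K * (3 + d) = 2 powr (p - 1) * (3 + d)" unfolding K_def ..
      also have "\<dots> \<le> (3 + d) powr (p - 1) * (3 + d)"
        by (intro mult_right_mono powr_mono2) (use p1 d0 in auto)
      also have "\<dots> = (3 + d) powr p" using d0 by (simp add: powr_diff)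
      finally have kd: "K * (3 + d) \<le> (3 + d) powr p" .
      have Seq: "S = (H powr (1/p)) powr p + ((H/2) powr (1/(2*p))) powr p" unfolding a b S_def ..
      have "K * (3 + d) * S \<le> (3 + d) powr p * S" by (rule mult_right_mono[OF kd S0])
      also have "\<dots> = (3 + d) powr p * ((H powr (1/p)) powr p + ((H/2) powr (1/(2*p))) powr p)"
        by (simp only: Seq)
      also have "\<dots> \<le> (3 + d) powr p * (H powr (1/p) + (H/2) powr (1/(2*p))) powr p"
        by (intro mult_left_mono powr_superadd) (use p1 in auto)
      also have "\<dots> = R powr p" unfolding R_def by (simp add: powr_mult)
      finally show ?thesis .
    qed
    have fin: "c0 \<noteq> \<infinity>" using c0b by (auto simp: top_unique)
    have e1: "enn2real c0 \<le> K * (3 + d) * S" by (rule enn2real_leI[OF _ c0b]) (use K1 d0 S0 in simp)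
    have "enn2real c0 powr (1/p) \<le> (K * (3 + d) * S) powr (1/p)"
      by (rule powr_mono2) (use p1 e1 in auto)
    also have "\<dots> \<le> (R powr p) powr (1/p)"
      by (rule powr_mono2) (use p1 VR K1 d0 S0 in auto)
    also have "\<dots> = R" using p1 R0 by (simp add: powr_powr powr_one)
    finally have main: "enn2real c0 powr (1/p) \<le> R" .
    have "wasserstein p \<Sigma> \<eta> \<zeta> = ennreal (enn2real c0 powr (1/p))"
      unfolding wasserstein_def c0_def[symmetric] Let_def using fin by simp
    also have "\<dots> \<le> ennreal R" using main by (rule ennreal_leI)
    finally show ?thesis unfolding KLH R_def d_def by simp
  qed
qed


end
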